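(* Let $k \geqslant 2$, $\ell \geqslant 0$, and let $A$ be as defined in the context. Then no string accepted by $A$ contains a factor (two consecutive symbols) of the form $a_i a_j$ with $j > i+1$.
   Context: A 2DFA $(\Sigma, Q, q_0, \delta, F)$: $\Sigma$ is a finite alphabet not containing end-markers $\vdash, \dashv$; $Q$ finite set of states; $q_0 \in Q$ initial; $\delta: Q \times (\Sigma \cup \{\vdash,\dashv\}) \to Q \times \{-1,+1\}$ partial; $F \subseteq Q$ accepting. On input $w = b_1\cdots b_m$ it works on tape $\vdash b_1 \cdots b_m \dashv$, starting at $\vdash$ in $q_0$; if $\delta(q,c)=(r,d)$ it enters $r$ and moves one cell in direction $d$; if undefined it rejects; it accepts if it ever arrives at $\dashv$ in a state of $F$; it may loop. Construction of $A$. Fix $k \geqslant 2$, $\ell \geqslant 0$, $Q^+ = \{1, \ldots, k\}$, $Q^- = \{1', \ldots, \ell'\}$, ordered by $i < j$ and $i' < j'$ iff $i < j$. A pair is $(P,R)$ with $P \subseteq Q^-$, $R \subseteq Q^+$, $|R| = |P|+1$. Writing $P = \{p_1 < \cdots < p_m\}$ and $R = \{r_1 < \cdots < r_{m+1}\}$, the sequence of the pair is the integer sequence $(r_1, -p_1, r_2, -p_2, \ldots, r_m, -p_m, r_{m+1})$, where a primed state $i'$ contributes the integer $i$ (so $-p_j$ for $p_j = i'$ is the integer $-i$). Pairs are ordered by the lexicographic order of their sequences (a proper prefix is smaller). Let $N = \binom{k+\ell}{\ell+1}$ be the number of pairs and enumerate them increasingly as $(P^{(1)},R^{(1)}) < \cdots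 < (P^{(N)},R^{(N)})$, with $P^{(i)} = \{p^{(i)}_1 < \cdots < p^{(i)}_{m_i}\}$ and $R^{(i)} = \{r^{(i)}_1 < \cdots < r^{(i)}_{m_i+1}\}$; in particular $(P^{(1)},R^{(1)}) = (\emptyset,\{1\})$ and $(P^{(N)},R^{(N)}) = (\emptyset,\{k\})$. The 2DFA $A$ has alphabet $\Sigma = \{a_1, \ldots, a_{N-1}\}$ (distinct symbols), states $Q = Q^+ \cup Q^-$, initial state $q_0 = 1$, accepting states $F = \{k\}$, and exactly the following transitions: $\delta(1, \vdash) = (r^{(1)}_1, +1)$; and for each $i \in \{1,\ldots,N-1\}$: $\delta(r^{(i)}_j, a_i) = (p^{(i)}_j, -1)$ for $j = 1, \ldots, m_i$; $\delta(r^{(i)}_{m_i+1}, a_i) = (r^{(i+1)}_1, +1)$; $\delta(p^{(i+1)}_j, a_i) = (r^{(i+1)}_{j+1}, +1)$ for $j = 1, \ldots, m_{i+1}$. No transitions are defined at $\dashv$. *)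

theory Defs
  imports Main "HOL-Library.List_Lexorder"
begin

text \<open>Lists of integers are ordered lexicographically (List_Lexorder): a proper prefix is smaller.\<close>

fun ilv :: "int list \<Rightarrow> int list \<Rightarrow> int list" where
  "ilv [] ps = []"
| "ilv (r # rs) [] = [r]"
| "ilv (r # rs) (p # ps) = r # p # ilv rs ps"

text \<open>Sequence of a pair (P,R): P a set of primed states (given by their indices), R of unprimed states.\<close>
definition pair_seq :: "nat set \<Rightarrow> nat set \<Rightarrow> int list" where
  "pair_seq P R = ilv (map int (sorted_list_of_set R)) (map (\<lambda>p. - int p) (sorted_list_of_set P))"

definition is_pair :: "nat \<Rightarrow> nat \<Rightarrow> nat set \<Rightarrow> nat set \<Rightarrow> bool" where
  "is_pair k l P R \<longleftrightarrow> P \<subseteq> {1..l} \<and> R \<subseteq> {1..k} \<and> card R = card P + 1"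

definition pair_seqs :: "nat \<Rightarrow> nat \<Rightarrow> int list set" where
  "pair_seqs k l = {pair_seq P R | P R. is_pair k l P R}"

definition sorted_pairs :: "nat \<Rightarrow> nat \<Rightarrow> int list list" where
  "sorted_pairs k l = sorted_list_of_set (pair_seqs k l)"

definition Npairs :: "nat \<Rightarrow> nat \<Rightarrow> nat" where
  "Npairs k l = card {(P, R). is_pair k l P R}"

definition seqn :: "nat \<Rightarrow> nat \<Rightarrow> nat \<Rightarrow> int list" where
  "seqn k l i = sorted_pairs k l ! (i - 1)"

text \<open>m_i = |P^(i)|, r^(i)_j and p^(i)_j (j 1-indexed), read off the sequence.\<close>
definition mi :: "nat \<Rightarrow> nat \<Rightarrow> nat \<Rightarrow> nat" where
  "mi k l i = length (seqn k l i) div 2"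

definition rr :: "nat \<Rightarrow> nat \<Rightarrow> nat \<Rightarrow> nat \<Rightarrow> nat" where
  "rr k l i j = nat (seqn k l i ! (2 * (j - 1)))"

definition pp :: "nat \<Rightarrow> nat \<Rightarrow> nat \<Rightarrow> nat \<Rightarrow> nat" where
  "pp k l i j = nat (- (seqn k l i ! (2 * j - 1)))"

text \<open>States: Pos i is i in Q^+, Neg i is i' in Q^-.\<close>
datatype state = Pos nat | Neg nat

datatype tsym = LEnd | REnd | Sym nat

text \<open>The transition table of A as a relation: delta k l q c (r, d) means delta(q,c) = (r,d).\<close>
definition delta :: "nat \<Rightarrow> nat \<Rightarrow> state \<Rightarrow> tsym \<Rightarrow> state \<times> int \<Rightarrow> bool" where
  "delta k l q c t \<longleftrightarrow>
     (q = Pos 1 \<and> c = LEnd \<and> t = (Pos (rr k l 1 1), 1))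
   \<or> (\<exists>i \<in> {1..Npairs k l - 1}. c = Sym i \<and>
        ((\<exists>j \<in> {1..mi k l i}. q = Pos (rr k l i j) \<and> t = (Neg (pp k l i j), -1))
         \<or> (q = Pos (rr k l i (mi k l i + 1)) \<and> t = (Pos (rr k l (i + 1) 1), 1))
         \<or> (\<exists>j \<in> {1..mi k l (i + 1)}. q = Neg (pp k l (i + 1) j) \<and> t = (Pos (rr k l (i + 1) (j + 1)), 1))))"

definition tape :: "nat list \<Rightarrow> int \<Rightarrow> tsym" where
  "tape w p = (if p = 0 then LEnd else if p = int (length w) + 1 then REnd else Sym (w ! nat (p - 1)))"

definition step :: "nat \<Rightarrow> nat \<Rightarrow> nat list \<Rightarrow> state \<times> int \<Rightarrow> state \<times> int \<Rightarrow> bool" where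
  "step k l w c c' \<longleftrightarrow> (case c of (q, p) \<Rightarrow> case c' of (q', p') \<Rightarrow>
      0 \<le> p \<and> p \<le> int (length w) + 1 \<and> (\<exists>d. delta k l q (tape w p) (q', d) \<and> p' = p + d))"

definition accepts :: "nat \<Rightarrow> nat \<Rightarrow> nat list \<Rightarrow> bool" where
  "accepts k l w \<longleftrightarrow> set w \<subseteq> {1..Npairs k l - 1} \<and>
     (step k l w)\<^sup>*\<^sup>* (Pos 1, 0) (Pos k, int (length w) + 1)"

end

theory Submission
  imports Defs
begin

lemma ilv_len: "length rs = Suc (length ps) \<Longrightarrow> length (ilv rs ps) = 2*length ps + 1"
proof (induction ps arbitrary: rs)
  case Nil then show ?case by (cases rs) auto
next
  case (Cons p ps) then show ?case by (cases rs) auto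
qed

lemma ilv_even: "length rs = Suc (length ps) \<Longrightarrow> u < length rs \<Longrightarrow> ilv rs ps ! (2*u) = rs!u"
proof (induction ps arbitrary: rs u)
  case Nil then show ?case by (cases rs) auto
next
  case (Cons p ps) then show ?case by (cases rs; cases u) auto
qed

lemma ilv_odd: "length rs = Suc (length ps) \<Longrightarrow> u < length ps \<Longrightarrow> ilv rs ps ! (2*u+1) = ps!u"
proof (induction ps arbitrary: rs u)
  case Nil then show ?case by (cases rs) auto
next
  case (Cons p ps) then show ?case by (cases rs; cases u) auto
qed

lemma ilv_set: "length rs = Suc (length ps) \<Longrightarrow> set (ilv rs ps) = set rs \<union> set ps"
proof (induction ps arbitrary: rs)
  case Nil then show ?case by (cases rs) auto
next
  case (Cons p ps) then show ?case by (cases rs) auto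
qed

definition goodL :: "int list \<Rightarrow> bool" where
  "goodL L \<longleftrightarrow> odd (length L) \<and> (\<forall>e<length L. even e \<longrightarrow> 0 < L!e) \<and> (\<forall>e<length L. odd e \<longrightarrow> L!e < 0)
     \<and> (\<forall>e e'. e < e' \<longrightarrow> e' < length L \<longrightarrow> even e \<longrightarrow> even e' \<longrightarrow> L!e < L!e')
     \<and> (\<forall>e e'. e < e' \<longrightarrow> e' < length L \<longrightarrow> odd e \<longrightarrow> odd e' \<longrightarrow> L!e' < L!e)"

lemma pair_seq_good:
  assumes "is_pair k l P R"
  shows "goodL (pair_seq P R)"
proof -
  define rs where "rs = sorted_list_of_set R"
  define ps where "ps = sorted_list_of_set P"
  have fR: "finite R" and fP: "finite P" using assms unfolding is_pair_def
    by (auto intro: finite_subset)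
  have R1: "\<forall>r\<in>R. 1 \<le> r" and P1: "\<forall>p\<in>P. 1 \<le> p" using assms unfolding is_pair_def by auto
  have lr: "length rs = card R" "length ps = card P" unfolding rs_def ps_def by auto
  have len: "length (map int rs) = Suc (length (map (\<lambda>p. - int p) ps))"
    using assms lr unfolding is_pair_def by simp
  have srs: "sorted_wrt (<) rs" and sps: "sorted_wrt (<) ps" unfolding rs_def ps_def by auto
  have setrs: "set rs = R" and setps: "set ps = P" unfolding rs_def ps_def using fR fP by auto
  let ?L = "ilv (map int rs) (map (\<lambda>p. - int p) ps)"
  have L: "pair_seq P R = ?L" unfolding pair_seq_def rs_def ps_def by simp
  have lenL: "length ?L = 2 * length ps + 1" using ilv_len[OF len] by simp
  have ev: "?L ! e = int (rs ! (e div 2))" if h: "even e" "e < length ?L" for e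
  proof -
    obtain u where u: "e = 2*u" using h by (auto elim!: evenE)
    have "u < length rs" using that u lenL len by simp
    then show ?thesis using ilv_even[OF len, of u] u by simp
  qed
  have od: "?L ! e = - int (ps ! (e div 2))" if h: "odd e" "e < length ?L" for e
  proof -
    obtain u where u: "e = 2*u+1" using h oddE by blast
    have "u < length ps" using that u lenL len by simp
    then show ?thesis using ilv_odd[OF len, of u] u by simp
  qed
  have "goodL ?L"
    unfolding goodL_def
  proof (intro conjI allI impI)
    show "odd (length ?L)" using lenL by simp
  next
    fix e assume "e < length ?L" "even e"
    moreover have "e div 2 < length rs" using calculation lenL len by auto
    ultimately show "0 < ?L ! e" using ev R1 setrs by (metis nth_mem of_nat_0_less_iff less_le_trans zero_less_one)
  next
    fix e assume "e < length ?L" "odd e"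
    moreover have "e div 2 < length ps" using calculation lenL len by (auto elim!: oddE)
    ultimately show "?L ! e < 0" using od P1 setps by (metis nth_mem neg_less_0_iff_less of_nat_0_less_iff less_le_trans zero_less_one)
  next
    fix e e' assume a: "e < e'" "e' < length ?L" "even e" "even e'"
    then have "e div 2 < e' div 2" "e' div 2 < length rs" using lenL len by auto
    then show "?L ! e < ?L ! e'" using ev a srs sorted_wrt_nth_less by fastforce
  next
    fix e e' assume a: "e < e'" "e' < length ?L" "odd e" "odd e'"
    then have "e div 2 < e' div 2" "e' div 2 < length ps" using lenL len by (auto elim!: oddE)
    then show "?L ! e' < ?L ! e" using od a sps sorted_wrt_nth_less by fastforce
  qed
  then show ?thesis using L by simp
qed

lemma pair_seq_set:
  assumes "is_pair k l P R"
  shows "R = {n. int n \<in> set (pair_seq P R)}" "P = {n. - int n \<in> set (pair_seq P R)}"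
proof -
  have fR: "finite R" and fP: "finite P" using assms unfolding is_pair_def
    by (auto intro: finite_subset)
  have R1: "\<forall>r\<in>R. 1 \<le> r" and P1: "\<forall>p\<in>P. 1 \<le> p" using assms unfolding is_pair_def by auto
  have len: "length (map int (sorted_list_of_set R)) = Suc (length (map (\<lambda>p. - int p) (sorted_list_of_set P)))"
    using assms unfolding is_pair_def by simp
  have S: "set (pair_seq P R) = int ` R \<union> (\<lambda>p. - int p) ` P"
    unfolding pair_seq_def using ilv_set[OF len] fR fP by simp
  show "R = {n. int n \<in> set (pair_seq P R)}" unfolding S using P1 by force
  show "P = {n. - int n \<in> set (pair_seq P R)}" unfolding S using R1 by force
qed

lemma lex_step:
  fixes xs ys :: "int list"
  assumes "xs < ys" "take n xs = take n ys" "n \<le> length xs" "n < length ys"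
  shows "n = length xs \<or> xs ! n \<le> ys ! n"
proof (rule ccontr)
  assume "\<not> ?thesis"
  then have "n < length xs" "ys ! n < xs ! n" using assms by auto
  then have "ys < xs" unfolding list_less_def lexord_take_index_conv using assms by auto
  then show False using assms(1) by simp
qed

lemma lex_noprefix:
  fixes xs ys :: "int list"
  assumes "xs < ys" "take n xs = take n ys" "n \<le> length xs" "n = length ys"
  shows False
proof -
  have "ys = take n xs" using assms by simp
  then have "ys \<le> xs"
    using assms unfolding list_le_def list_less_def lexord_take_index_conv
    by (cases "n = length xs") auto
  then show False using assms(1) by simp
qed


lemma pairs_finite: "finite {(P, R). is_pair k l P R}"
proof (rule finite_subset)
  show "{(P, R). is_pair k l P R} \<subseteq> Pow {1..l} \<times> Pow {1..k}" unfolding is_pair_def by auto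
qed auto

lemma pair_seqs_image: "pair_seqs k l = (\<lambda>(P, R). pair_seq P R) ` {(P, R). is_pair k l P R}"
  unfolding pair_seqs_def by auto

lemma pair_seq_inj: "inj_on (\<lambda>(P, R). pair_seq P R) {(P, R). is_pair k l P R}"
proof (rule inj_onI)
  fix x y assume "x \<in> {(P, R). is_pair k l P R}" "y \<in> {(P, R). is_pair k l P R}"
    "(\<lambda>(P, R). pair_seq P R) x = (\<lambda>(P, R). pair_seq P R) y"
  then show "x = y" using pair_seq_set by (cases x; cases y) (metis case_prod_conv mem_Collect_eq)
qed

lemma len_sorted_pairs: "length (sorted_pairs k l) = Npairs k l"
proof -
  have "finite (pair_seqs k l)" unfolding pair_seqs_image using pairs_finite by simp
  then have "length (sorted_pairs k l) = card (pair_seqs k l)" unfolding sorted_pairs_def by simp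
  also have "\<dots> = Npairs k l" unfolding pair_seqs_image Npairs_def
    using card_image[OF pair_seq_inj] by simp
  finally show ?thesis .
qed

lemma sorted_pairs_good: "i < Npairs k l \<Longrightarrow> goodL (sorted_pairs k l ! i)"
proof -
  assume "i < Npairs k l"
  then have "sorted_pairs k l ! i \<in> set (sorted_pairs k l)" using len_sorted_pairs by (metis nth_mem)
  moreover have "finite (pair_seqs k l)" unfolding pair_seqs_image using pairs_finite by simp
  ultimately have "sorted_pairs k l ! i \<in> pair_seqs k l" unfolding sorted_pairs_def by simp
  then show ?thesis unfolding pair_seqs_def using pair_seq_good by auto
qed

lemma sorted_pairs_less: "i < j \<Longrightarrow> j < Npairs k l \<Longrightarrow> sorted_pairs k l ! i < sorted_pairs k l ! j"
proof -
  assume "i < j" "j < Npairs k l"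
  moreover have "sorted_wrt (<) (sorted_pairs k l)" unfolding sorted_pairs_def by simp
  ultimately show ?thesis using len_sorted_pairs sorted_wrt_nth_less by metis
qed


lemma gLen: "goodL L \<Longrightarrow> odd (length L)" unfolding goodL_def by simp
lemma gE: "goodL L \<Longrightarrow> even e \<Longrightarrow> e < length L \<Longrightarrow> 0 < L!e" unfolding goodL_def by simp
lemma gO: "goodL L \<Longrightarrow> odd e \<Longrightarrow> e < length L \<Longrightarrow> L!e < 0" unfolding goodL_def by simp
lemma gEE: "goodL L \<Longrightarrow> e < e' \<Longrightarrow> e' < length L \<Longrightarrow> even e \<Longrightarrow> even e' \<Longrightarrow> L!e < L!e'"
  unfolding goodL_def by blast
lemma gOO: "goodL L \<Longrightarrow> e < e' \<Longrightarrow> e' < length L \<Longrightarrow> odd e \<Longrightarrow> odd e' \<Longrightarrow> L!e' < L!e"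
  unfolding goodL_def by blast

lemma delta_Sym: "delta k l q (Sym s) (q', d) \<longleftrightarrow> s \<in> {1..Npairs k l - 1} \<and>
   ((\<exists>j\<in>{1..mi k l s}. q = Pos (rr k l s j) \<and> q' = Neg (pp k l s j) \<and> d = -1)
  \<or> (q = Pos (rr k l s (mi k l s + 1)) \<and> q' = Pos (rr k l (s + 1) 1) \<and> d = 1)
  \<or> (\<exists>j\<in>{1..mi k l (s+1)}. q = Neg (pp k l (s + 1) j) \<and> q' = Pos (rr k l (s + 1) (j + 1)) \<and> d = 1))"
  unfolding delta_def by auto

lemma delta_dir: "delta k l q c (q', d) \<Longrightarrow> (d = 1 \<and> (\<exists>r. q' = Pos r)) \<or> (d = -1 \<and> (\<exists>m. q' = Neg m))"
  unfolding delta_def by auto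

lemma goodL_even_inj:
  assumes "goodL L" "even e" "even e'" "e < length L" "e' < length L" "nat (L!e) = nat (L!e')"
  shows "e = e'"
proof -
  have "0 < L!e" "0 < L!e'" using assms gE by auto
  then have "L!e = L!e'" using assms(6) by simp
  then show ?thesis using assms gEE[of L e e'] gEE[of L e' e] by (metis less_irrefl linorder_neqE_nat)
qed

lemma goodL_odd_inj:
  assumes "goodL L" "odd e" "odd e'" "e < length L" "e' < length L" "nat (- (L!e)) = nat (- (L!e'))"
  shows "e = e'"
proof -
  have "L!e < 0" "L!e' < 0" using assms gO by auto
  then have "L!e = L!e'" using assms(6) by simp
  then show ?thesis using assms gOO[of L e e'] gOO[of L e' e] by (metis less_irrefl linorder_neqE_nat)
qed


lemma core:
  assumes acc: "accepts k l w" and i0: "i0 + 1 < length w"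
    and ab: "w ! (i0 + 1) > w ! i0 + 1"
  shows False
proof -
  define a where "a = w ! i0"
  define b where "b = w ! (i0 + 1)"
  define N where "N = Npairs k l"
  define A where "A = seqn k l (a + 1)"
  define B where "B = seqn k l b"
  define X where "X = int i0 + 1"
  have setw: "set w \<subseteq> {1..N - 1}" using acc unfolding accepts_def N_def by simp
  have a1: "a \<in> {1..N-1}" proof -
    have "w ! i0 \<in> set w" using i0 by simp
    then show ?thesis unfolding a_def using setw by blast
  qed
  have b1: "b \<in> {1..N-1}" proof -
    have "w ! (i0+1) \<in> set w" using i0 by (meson nth_mem)
    then show ?thesis unfolding b_def using setw by blast
  qed
  have ab': "a + 1 < b" using ab unfolding a_def b_def by simp
  have Aeq: "A = sorted_pairs k l ! a" unfolding A_def seqn_def by simp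
  have Beq: "B = sorted_pairs k l ! (b - 1)" unfolding B_def seqn_def by simp
  have gA: "goodL A" unfolding Aeq using a1 b1 ab' by (intro sorted_pairs_good) (simp add: N_def)
  have gB: "goodL B" unfolding Beq using b1 by (intro sorted_pairs_good) (auto simp add: N_def)
  have AB: "A < B" unfolding Aeq Beq using a1 b1 ab' by (intro sorted_pairs_less) (auto simp add: N_def)
  have tX: "tape w X = Sym a" unfolding tape_def X_def a_def using i0 by auto
  have tX1: "tape w (X + 1) = Sym b" unfolding tape_def X_def b_def using i0
    by (auto simp: nat_add_distrib)
  have oA: "odd (length A)" and oB: "odd (length B)" using gA gB gLen by auto
  \<comment> \<open>K1: a positive state at X+1 that is not in B's positive entries is stuck\<close>
  have K1: "\<not> step k l w (Pos (nat (A!e)), X + 1) (q', p')"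
    if h: "even e" "e < length A" "take e A = take e B" "e < length B" "A!e < B!e" for e q' p'
  proof
    assume "step k l w (Pos (nat (A!e)), X + 1) (q', p')"
    then obtain d where "delta k l (Pos (nat (A!e))) (Sym b) (q', d)"
      unfolding step_def using tX1 by auto
    then have "(\<exists>j\<in>{1..mi k l b}. Pos (nat (A!e)) = Pos (rr k l b j)) \<or> Pos (nat (A!e)) = Pos (rr k l b (mi k l b + 1))"
      unfolding delta_Sym by blast
    then obtain u where u: "1 \<le> u" "u \<le> mi k l b + 1" "nat (A!e) = rr k l b u"
    proof (elim disjE bexE)
      fix j assume "j \<in> {1..mi k l b}" "Pos (nat (A!e)) = Pos (rr k l b j)"
      then show ?thesis using that[of j] by simp
    next
      assume "Pos (nat (A!e)) = Pos (rr k l b (mi k l b + 1))"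
      then show ?thesis using that[of "mi k l b + 1"] by simp
    qed
    define e'' where "e'' = 2 * (u - 1)"
    have e''1: "even e''" "e'' < length B" using u oB unfolding e''_def mi_def B_def
      by (auto elim!: oddE)
    have "rr k l b u = nat (B!e'')" unfolding rr_def e''_def B_def by (rule refl)
    then have "nat (A!e) = nat (B!e'')" using u(3) by simp
    moreover have "0 < A!e" "0 < B!e''" using gE[OF gA h(1,2)] gE[OF gB e''1] by auto
    ultimately have eq: "A!e = B!e''" by simp
    show False
    proof (cases "e'' < e")
      case True
      then have "e'' \<le> e - 2" "2 \<le> e" using h(1) e''1(1) by (auto elim!: evenE)
      moreover have "e - 2 < length B" using h by linarith
      ultimately have "B!e'' \<le> B!(e-2)" using gEE[OF gB, of e'' "e-2"] h e''1
        by (cases "e'' = e - 2") auto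
      moreover have "B!(e-2) = A!(e-2)"
      proof -
        have "e - 2 < e" using \<open>2 \<le> e\<close> by simp
        then have "take e A ! (e-2) = A ! (e-2)" "take e B ! (e-2) = B ! (e-2)" by (simp_all only: nth_take)
        then show ?thesis using h(3) by simp
      qed
      moreover have "A!(e-2) < A!e" using gEE[OF gA, of "e-2" e] h \<open>2 \<le> e\<close> by auto
      ultimately show False using eq by simp
    next
      case False
      then have "e = e'' \<or> e < e''" by auto
      then show False using eq h gEE[OF gB, of e e''] e''1 by auto
    qed
  qed
  \<comment> \<open>K2: a negative state at X not among A's negative entries is stuck\<close>
  have K2: "\<not> step k l w (Neg (nat (- (B!e))), X) (q', p')"
    if h: "odd e" "e < length B" "take e A = take e B" "e \<le> length A" "e = length A \<or> A!e < B!e" for e q' p'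
  proof
    assume "step k l w (Neg (nat (- (B!e))), X) (q', p')"
    then obtain d where "delta k l (Neg (nat (- (B!e)))) (Sym a) (q', d)"
      unfolding step_def using tX by auto
    then have "\<exists>j\<in>{1..mi k l (a+1)}. Neg (nat (- (B!e))) = Neg (pp k l (a + 1) j)"
      unfolding delta_Sym by blast
    then obtain u where u: "1 \<le> u" "u \<le> mi k l (a + 1)" "nat (- (B!e)) = pp k l (a + 1) u"
      by auto
    define e'' where "e'' = 2 * u - 1"
    have e''1: "odd e''" "e'' < length A" using u oA unfolding e''_def mi_def A_def
      by (auto elim!: oddE)
    have "pp k l (a + 1) u = nat (- (A!e''))" unfolding pp_def e''_def A_def by (rule refl)
    then have "nat (- (B!e)) = nat (- (A!e''))" using u(3) by simp
    moreover have "A!e'' < 0" "B!e < 0" using gO[OF gA e''1] gO[OF gB h(1,2)] by auto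
    ultimately have eq: "A!e'' = B!e" by simp
    show False
    proof (cases "e'' < e")
      case True
      then have "take e A ! e'' = A ! e''" "take e B ! e'' = B ! e''" by (simp_all only: nth_take)
      then have "A!e'' = B!e''" using h(3) by simp
      moreover have "B!e < B!e''" using gOO[OF gB True] h e''1 by auto
      ultimately show False using eq by simp
    next
      case False
      then have "e < length A" using e''1 by auto
      then have "A!e < B!e" using h by auto
      moreover have "A!e'' \<le> A!e" using False gOO[OF gA, of e e''] h e''1
        by (cases "e = e''") auto
      ultimately show False using eq by simp
    qed
  qed
  have rrA: "\<And>j. rr k l (a+1) j = nat (A ! (2*(j-1)))" unfolding rr_def A_def by (rule refl)
  have ppA: "\<And>j. pp k l (a+1) j = nat (- (A ! (2*j-1)))" unfolding pp_def A_def by (rule refl)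
  have miA: "mi k l (a+1) = length A div 2" unfolding mi_def A_def by (rule refl)
  have rrB: "\<And>j. rr k l b j = nat (B ! (2*(j-1)))" unfolding rr_def B_def by (rule refl)
  have ppB: "\<And>j. pp k l b j = nat (- (B ! (2*j-1)))" unfolding pp_def B_def by (rule refl)
  have miB: "mi k l b = length B div 2" unfolding mi_def B_def by (rule refl)
  define G1 where "G1 = (\<lambda>q. \<exists>e. even e \<and> e < length A \<and> q = Pos (nat (A!e)) \<and> take (e+1) A = take (e+1) B)"
  define G2 where "G2 = (\<lambda>m. \<exists>e. odd e \<and> e < length A \<and> m = nat (- (A!e)) \<and> take (e+1) A = take (e+1) B)"
  define inv where "inv = (\<lambda>q p. p \<le> X + 1
     \<and> (p = X + 1 \<longrightarrow> G1 q \<or> (\<forall>q' p'. \<not> step k l w (q, p) (q', p')))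
     \<and> (p = X \<longrightarrow> (\<forall>m. q = Neg m \<longrightarrow> G2 m \<or> (\<forall>q' p'. \<not> step k l w (q, p) (q', p')))))"
  have enter: "G1 (Pos (nat (A!e))) \<or> (\<forall>q' p'. \<not> step k l w (Pos (nat (A!e)), X + 1) (q', p'))"
    if h: "even e" "e < length A" "take e A = take e B" for e
  proof -
    have eB: "e < length B"
    proof (rule ccontr)
      assume "\<not> e < length B"
      then have "take (length B) A = take (length B) B" using h(3)
        by (metis min_absorb1 not_le take_take order_less_imp_le)
      then show False using lex_noprefix[OF AB, of "length B"] h \<open>\<not> e < length B\<close> by auto
    qed
    have "A!e \<le> B!e" using lex_step[OF AB h(3)] h eB by auto
    then consider "A!e = B!e" | "A!e < B!e" by linarith
    then show ?thesis
    proof cases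
      case 1
      then have "take (e+1) A = take (e+1) B" using h eB by (simp add: take_Suc_conv_app_nth)
      then show ?thesis unfolding G1_def using h by blast
    next
      case 2
      then show ?thesis using K1[OF h eB 2] by blast
    qed
  qed
  have pres: "inv q' p'" if st: "step k l w (q, p) (q', p')" and iv: "inv q p" for q p q' p'
  proof -
    from st obtain d where p0: "0 \<le> p" and dl: "delta k l q (tape w p) (q', d)" and pd: "p' = p + d"
      unfolding step_def by auto
    have dd: "(d = 1 \<and> (\<exists>r. q' = Pos r)) \<or> (d = -1 \<and> (\<exists>m. q' = Neg m))" using delta_dir[OF dl] .
    have pX: "p \<le> X + 1" using iv unfolding inv_def by simp
    consider "p < X" | "p = X" | "p = X + 1" using pX by linarith
    then show ?thesis
    proof cases
      case 1
      then show ?thesis using dd pd unfolding inv_def by auto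
    next
      case 2
      have dl': "delta k l q (Sym a) (q', d)" using dl 2 tX by simp
      show ?thesis
      proof (cases "d = 1")
        case False
        then show ?thesis using dd pd 2 unfolding inv_def by auto
      next
        case True
        have claim: "\<exists>e. even e \<and> e < length A \<and> q' = Pos (nat (A!e)) \<and> take e A = take e B"
        proof -
          from dl'[unfolded delta_Sym] True consider
              "q' = Pos (rr k l (a + 1) 1)"
            | j where "j \<in> {1..mi k l (a+1)}" "q = Neg (pp k l (a + 1) j)" "q' = Pos (rr k l (a + 1) (j + 1))"
            by auto
          then show ?thesis
          proof cases
            case 1
            then show ?thesis using rrA oA by (intro exI[of _ 0]) (auto elim!: oddE)
          next
            case (2 j)
            have "G2 (pp k l (a + 1) j)"
              using iv 2 st unfolding inv_def \<open>p = X\<close> by auto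
            then obtain e where e: "odd e" "e < length A" "pp k l (a+1) j = nat (- (A!e))"
              "take (e+1) A = take (e+1) B" unfolding G2_def by auto
            have j1: "odd (2*j-1)" "2*j-1 < length A" using 2 miA oA by (auto elim!: oddE)
            have "2*j-1 = e" using goodL_odd_inj[OF gA j1(1) e(1) j1(2) e(2)] e(3) ppA by simp
            then have "2*j = e+1" using 2 by auto
            moreover have "e + 1 < length A" using e oA by (metis Suc_eq_plus1 Suc_lessI even_Suc)
            ultimately show ?thesis using 2 rrA e by (intro exI[of _ "e+1"]) auto
          qed
        qed
        then obtain e where e: "even e" "e < length A" "q' = Pos (nat (A!e))" "take e A = take e B" by blast
        have "p' = X + 1" using pd True 2 by simp
        then show ?thesis using enter[OF e(1,2,4)] e(3) unfolding inv_def by auto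
      qed
    next
      case 3
      have "G1 q" using iv st 3 unfolding inv_def by auto
      then obtain e where e: "even e" "e < length A" "q = Pos (nat (A!e))" "take (e+1) A = take (e+1) B"
        unfolding G1_def by auto
      have eB: "e < length B"
      proof (rule ccontr)
        assume "\<not> e < length B"
        then have "take (length B) A = take (length B) B" using e(4)
          by (metis min_absorb1 not_le take_take le_SucI order_less_imp_le Suc_eq_plus1 not_less_eq_eq)
        then show False using lex_noprefix[OF AB, of "length B"] e \<open>\<not> e < length B\<close> by auto
      qed
      have AeBe: "A!e = B!e" using e(4) by (metis less_add_one nth_take)
      have dl': "delta k l (Pos (nat (A!e))) (Sym b) (q', d)" using dl 3 tX1 e(3) by simp
      from dl'[unfolded delta_Sym] consider
          j where "j \<in> {1..mi k l b}" "nat (A!e) = rr k l b j" "q' = Neg (pp k l b j)" "d = -1"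
        | "nat (A!e) = rr k l b (mi k l b + 1)"
        by auto
      then show ?thesis
      proof cases
        case (1 j)
        have j1: "even (2*(j-1))" "2*(j-1) < length B" using 1 miB oB by (auto elim!: oddE)
        have "2*(j-1) = e" using goodL_even_inj[OF gB j1(1) _ j1(2) eB] 1(2) rrB AeBe e(1) by simp
        then have je: "2*j-1 = e+1" using 1 by auto
        have e1B: "e + 1 < length B" using 1 miB oB je by (auto elim!: oddE)
        have q': "q' = Neg (nat (- (B!(e+1))))" using 1 ppB je by simp
        have p': "p' = X" using pd 1 3 by simp
        have "e + 1 = length A \<or> A!(e+1) \<le> B!(e+1)"
          using lex_step[OF AB e(4)] e e1B by auto
        moreover have "e + 1 \<le> length A" using e(2) by simp
        ultimately consider "e + 1 < length A" "A!(e+1) = B!(e+1)" | "e + 1 = length A \<or> A!(e+1) < B!(e+1)"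
          by (cases "e + 1 = length A") (auto simp: order_le_less)
        then show ?thesis
        proof cases
          case 1
          have "take (e+2) A = take (e+2) B" using e(4) 1 e1B
            by (metis add_2_eq_Suc' take_Suc_conv_app_nth Suc_eq_plus1)
          then have "G2 (nat (- (B!(e+1))))" unfolding G2_def using 1 e
            by (intro exI[of _ "e+1"]) (simp add: add.assoc)
          then show ?thesis using p' q' unfolding inv_def by auto
        next
          case 2
          have "odd (e+1)" using e by simp
          then have "\<forall>q'' p''. \<not> step k l w (Neg (nat (- (B!(e+1)))), X) (q'', p'')"
            using K2[of "e+1"] e1B e 2 by (auto simp: less_Suc_eq)
          then show ?thesis using p' q' unfolding inv_def by auto
        qed
      next
        case 2
        have j1: "even (2 * mi k l b)" "2 * mi k l b < length B" using miB oB by (auto elim!: oddE)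
        have "2 * mi k l b = e" using goodL_even_inj[OF gB j1(1) _ j1(2) eB] 2 rrB AeBe e(1) by simp
        then have "e + 1 = length B" using miB oB by (auto elim!: oddE)
        then show ?thesis using lex_noprefix[OF AB e(4)] e by simp
      qed
    qed
  qed
  have reach: "inv (fst c) (snd c)" if "(step k l w)\<^sup>*\<^sup>* (Pos 1, 0) c" for c
    using that
  proof (induction rule: rtranclp_induct)
    case base
    then show ?case unfolding inv_def X_def by simp
  next
    case (step y z)
    then show ?case using pres[of "fst y" "snd y" "fst z" "snd z"] by simp
  qed
  have "(step k l w)\<^sup>*\<^sup>* (Pos 1, 0) (Pos k, int (length w) + 1)" using acc unfolding accepts_def by simp
  from reach[OF this] show False using i0 unfolding inv_def X_def by simp
qed


theorem mainTheorem7: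
  fixes k l :: nat and w :: "nat list"
  assumes "k \<ge> 2"
    and "accepts k l w"
  shows "\<forall>i. i + 1 < length w \<longrightarrow> \<not> (w ! (i + 1) > w ! i + 1)"
  using core[OF assms(2)] by blast

end
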